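(* Let $M$ be a matroid on a finite set $S$ with primary flag $T_0\subset\cdots\subset T_k$. Then the set $\mathcal F(M)$ of free separators of $M$ equals $\bigcup_{i=1}^k [T_{i-1},T_i]\cap\mathcal F(M)$, and for each $1\leq i\leq k$, $$[T_{i-1},T_i]\cap \mathcal F(M)=\begin{cases}[T_{i-1},T_i] & \text{if } T_i \text{ covers } T_{i-1} \text{ in } \mathcal D(M),\\ \{T_{i-1},T_i\} & \text{otherwise},\end{cases}$$ so that each such interval is a Boolean algebra.
   Context: A cyclic flat of a matroid is a flat that is a union of circuits. A subset $A\subseteq S$ is a free separator of $M$ if every cyclic flat of $M$ is comparable to $A$ by inclusion; $\mathcal F(M)$ is the set of free separators ordered by inclusion. $\mathcal D(M)$ is the complete sublattice of the Boolean algebra $2^S$ generated by all cyclic flats of $M$ (it contains $\emptyset$ and $S$). A pinchpoint of a poset is an element comparable to every element. The primary flag of $M$ is the chain $T_0\subset\cdots\subset T_k$ of all pinchpoints of $\mathcal D(M)$. For $A\subseteq B\subseteq S$, $[A,B]=\{U\subseteq S: A\subseteq U\subseteq B\}$. *)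

theory Defs
  imports Main
begin

definition matroid :: "'a set \<Rightarrow> ('a set \<Rightarrow> bool) \<Rightarrow> bool" where
  "matroid S indep \<longleftrightarrow>
     finite S \<and>
     (\<forall>X. indep X \<longrightarrow> X \<subseteq> S) \<and>
     indep {} \<and>
     (\<forall>X Y. indep X \<and> Y \<subseteq> X \<longrightarrow> indep Y) \<and>
     (\<forall>X Y. indep X \<and> indep Y \<and> card X < card Y \<longrightarrow>
        (\<exists>e\<in>Y - X. indep (insert e X)))"

definition mrank :: "('a set \<Rightarrow> bool) \<Rightarrow> 'a set \<Rightarrow> nat" where
  "mrank indep X = Max {card Y | Y. Y \<subseteq> X \<and> indep Y}"

definition circuit :: "'a set \<Rightarrow> ('a set \<Rightarrow> bool) \<Rightarrow> 'a set \<Rightarrow> bool" where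
  "circuit S indep C \<longleftrightarrow> C \<subseteq> S \<and> \<not> indep C \<and> (\<forall>x\<in>C. indep (C - {x}))"

definition flat :: "'a set \<Rightarrow> ('a set \<Rightarrow> bool) \<Rightarrow> 'a set \<Rightarrow> bool" where
  "flat S indep F \<longleftrightarrow> F \<subseteq> S \<and>
     (\<forall>e\<in>S - F. mrank indep (insert e F) > mrank indep F)"

definition cyclic_flat :: "'a set \<Rightarrow> ('a set \<Rightarrow> bool) \<Rightarrow> 'a set \<Rightarrow> bool" where
  "cyclic_flat S indep F \<longleftrightarrow> flat S indep F \<and>
     F = \<Union>{C. circuit S indep C \<and> C \<subseteq> F}"

text \<open>D(M): the complete sublattice of 2^S generated by the cyclic flats
  (S finite, so closure under binary unions/intersections plus the empty
   join {} and the empty meet S suffices).\<close>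
inductive_set Dlat :: "'a set \<Rightarrow> ('a set \<Rightarrow> bool) \<Rightarrow> 'a set set"
  for S indep where
  cyc: "cyclic_flat S indep F \<Longrightarrow> F \<in> Dlat S indep"
| bot: "{} \<in> Dlat S indep"
| top: "S \<in> Dlat S indep"
| un: "A \<in> Dlat S indep \<Longrightarrow> B \<in> Dlat S indep \<Longrightarrow> A \<union> B \<in> Dlat S indep"
| int: "A \<in> Dlat S indep \<Longrightarrow> B \<in> Dlat S indep \<Longrightarrow> A \<inter> B \<in> Dlat S indep"

definition free_separators :: "'a set \<Rightarrow> ('a set \<Rightarrow> bool) \<Rightarrow> 'a set set" where
  "free_separators S indep = {A. A \<subseteq> S \<and>
     (\<forall>Z. cyclic_flat S indep Z \<longrightarrow> Z \<subseteq> A \<or> A \<subseteq> Z)}"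

definition pinchpoints :: "'a set \<Rightarrow> ('a set \<Rightarrow> bool) \<Rightarrow> 'a set set" where
  "pinchpoints S indep = {X \<in> Dlat S indep. \<forall>Y\<in>Dlat S indep. X \<subseteq> Y \<or> Y \<subseteq> X}"

definition set_interval :: "'a set \<Rightarrow> 'a set \<Rightarrow> 'a set set" where
  "set_interval A B = {U. A \<subseteq> U \<and> U \<subseteq> B}"

definition covers_in :: "'a set set \<Rightarrow> 'a set \<Rightarrow> 'a set \<Rightarrow> bool" where
  "covers_in P B A \<longleftrightarrow> A \<in> P \<and> B \<in> P \<and> A \<subset> B \<and> \<not> (\<exists>U\<in>P. A \<subset> U \<and> U \<subset> B)"

end

theory Submission
  imports Defs
begin

lemma D_sub: "X \<in> Dlat S indep \<Longrightarrow> X \<subseteq> S"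
  by (induction rule: Dlat.induct) (auto simp: cyclic_flat_def flat_def)

lemma fs_comp:
  assumes "A \<in> free_separators S indep" "X \<in> Dlat S indep"
  shows "X \<subseteq> A \<or> A \<subseteq> X"
  using assms(2)
proof (induction rule: Dlat.induct)
  case (cyc F) then show ?case using assms(1) by (auto simp: free_separators_def)
next
  case top then show ?case using assms(1) by (auto simp: free_separators_def)
qed auto

lemma D_Union: "finite F \<Longrightarrow> F \<subseteq> Dlat S indep \<Longrightarrow> \<Union>F \<in> Dlat S indep"
  by (induction rule: finite_induct) (auto intro: Dlat.intros)

lemma D_Inter: "finite F \<Longrightarrow> F \<subseteq> Dlat S indep \<Longrightarrow> S \<inter> \<Inter>F \<in> Dlat S indep"
proof (induction rule: finite_induct)
  case empty then show ?case by (auto intro: Dlat.intros)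
next
  case (insert x F)
  have "S \<inter> \<Inter>(insert x F) = x \<inter> (S \<inter> \<Inter>F)" by auto
  then show ?case using insert by (auto intro: Dlat.int)
qed

lemma D_finite: "finite S \<Longrightarrow> finite (Dlat S indep)"
  by (rule finite_subset[of _ "Pow S"]) (auto dest: D_sub)

lemma key:
  assumes "finite S" "A \<in> free_separators S indep"
  shows "\<exists>L U. L \<in> pinchpoints S indep \<and> U \<in> pinchpoints S indep \<and> L \<subseteq> A \<and> A \<subseteq> U
     \<and> (\<forall>X\<in>Dlat S indep. X \<subseteq> L \<or> U \<subseteq> X)"
proof -
  define L where "L = \<Union>{X\<in>Dlat S indep. X \<subseteq> A}"
  define U where "U = S \<inter> \<Inter>{X\<in>Dlat S indep. A \<subseteq> X}"
  have fin: "finite (Dlat S indep)" using D_finite assms(1) by blast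
  have LD: "L \<in> Dlat S indep" unfolding L_def by (rule D_Union) (use fin in auto)
  have UD: "U \<in> Dlat S indep" unfolding U_def by (rule D_Inter) (use fin in auto)
  have AS: "A \<subseteq> S" using assms(2) by (auto simp: free_separators_def)
  have LA: "L \<subseteq> A" unfolding L_def by auto
  have AU: "A \<subseteq> U" unfolding U_def using AS by auto
  have split: "\<forall>X\<in>Dlat S indep. X \<subseteq> L \<or> U \<subseteq> X"
  proof
    fix X assume X: "X \<in> Dlat S indep"
    then have "X \<subseteq> A \<or> A \<subseteq> X" using fs_comp assms(2) by blast
    then show "X \<subseteq> L \<or> U \<subseteq> X"
    proof
      assume "X \<subseteq> A" then show ?thesis using X unfolding L_def by auto
    next
      assume "A \<subseteq> X" then show ?thesis using X unfolding U_def by auto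
    qed
  qed
  have LU: "L \<subseteq> U" using LA AU by (rule subset_trans)
  have "\<forall>Y\<in>Dlat S indep. L \<subseteq> Y \<or> Y \<subseteq> L"
  proof
    fix Y assume "Y \<in> Dlat S indep"
    then have "Y \<subseteq> L \<or> U \<subseteq> Y" using split by blast
    then show "L \<subseteq> Y \<or> Y \<subseteq> L" using LU by (meson subset_trans)
  qed
  then have P1: "L \<in> pinchpoints S indep" unfolding pinchpoints_def using LD by simp
  have "\<forall>Y\<in>Dlat S indep. U \<subseteq> Y \<or> Y \<subseteq> U"
  proof
    fix Y assume "Y \<in> Dlat S indep"
    then have "Y \<subseteq> L \<or> U \<subseteq> Y" using split by blast
    then show "U \<subseteq> Y \<or> Y \<subseteq> U" using LU by (meson subset_trans)
  qed
  then have P2: "U \<in> pinchpoints S indep" unfolding pinchpoints_def using UD by simp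
  show ?thesis
    apply (rule exI[where x=L], rule exI[where x=U])
    using P1 P2 LA AU split by simp
qed

lemma pinch_fs: "P \<in> pinchpoints S indep \<Longrightarrow> P \<in> free_separators S indep"
proof -
  assume P: "P \<in> pinchpoints S indep"
  then have PD: "P \<in> Dlat S indep" and C: "\<forall>Y\<in>Dlat S indep. P \<subseteq> Y \<or> Y \<subseteq> P"
    unfolding pinchpoints_def by simp_all
  have "P \<subseteq> S" using PD by (rule D_sub)
  moreover have "\<forall>Z. cyclic_flat S indep Z \<longrightarrow> Z \<subseteq> P \<or> P \<subseteq> Z"
    using C Dlat.cyc by blast
  ultimately show ?thesis unfolding free_separators_def by simp
qed

theorem proposition6p15:
  fixes S :: "'a set" and indep :: "'a set \<Rightarrow> bool" and T :: "'a set list"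
  assumes "matroid S indep"
    and "S \<noteq> {}"
    and "sorted_wrt (\<subset>) T"
    and "set T = pinchpoints S indep"
  shows "free_separators S indep =
           (\<Union>i\<in>{1..<length T}. set_interval (T ! (i - 1)) (T ! i) \<inter> free_separators S indep)
         \<and> (\<forall>i\<in>{1..<length T}.
           set_interval (T ! (i - 1)) (T ! i) \<inter> free_separators S indep =
           (if covers_in (Dlat S indep) (T ! i) (T ! (i - 1))
            then set_interval (T ! (i - 1)) (T ! i)
            else {T ! (i - 1), T ! i}))"
proof -
  have finS: "finite S" using assms(1) by (simp add: matroid_def)
  have srt: "\<And>i j. i < j \<Longrightarrow> j < length T \<Longrightarrow> T ! i \<subset> T ! j"
    using assms(3) sorted_wrt_nth_less by blast
  have le: "\<And>i j. i \<le> j \<Longrightarrow> j < length T \<Longrightarrow> T ! i \<subseteq> T ! j"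
  proof -
    fix i j :: nat assume "i \<le> j" "j < length T"
    then show "T ! i \<subseteq> T ! j"
    proof (cases "i = j")
      case False then have "i < j" using \<open>i \<le> j\<close> by simp
      then show ?thesis using srt \<open>j < length T\<close> by blast
    qed simp
  qed
  have e: "{} \<in> pinchpoints S indep" unfolding pinchpoints_def by (simp add: Dlat.bot)
  have s: "S \<in> pinchpoints S indep" unfolding pinchpoints_def
  proof -
    have "\<forall>Y\<in>Dlat S indep. Y \<subseteq> S" using D_sub by blast
    then show "S \<in> {X \<in> Dlat S indep. \<forall>Y\<in>Dlat S indep. X \<subseteq> Y \<or> Y \<subseteq> X}"
      by (simp add: Dlat.top)
  qed
  have len: "length T \<ge> 2"
  proof (rule ccontr)
    assume "\<not> 2 \<le> length T"
    then have "card (set T) \<le> 1" using card_length[of T] by linarith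
    moreover have "{{}, S} \<subseteq> set T" using e s unfolding assms(4) by simp
    moreover have "card {{}, S} = 2" using assms(2) by auto
    ultimately show False using card_mono[of "set T" "{{},S}"] by auto
  qed
  have pinD: "\<And>P. P \<in> set T \<Longrightarrow> P \<in> Dlat S indep"
    using assms(4) unfolding pinchpoints_def by auto
  have pinC: "\<And>P X. P \<in> set T \<Longrightarrow> X \<in> Dlat S indep \<Longrightarrow> P \<subseteq> X \<or> X \<subseteq> P"
    using assms(4) unfolding pinchpoints_def by auto
  have consec: "\<And>i P. i \<in> {1..<length T} \<Longrightarrow> P \<in> set T \<Longrightarrow> T!(i-1) \<subseteq> P \<Longrightarrow> P \<subseteq> T!i
      \<Longrightarrow> P = T!(i-1) \<or> P = T!i"
  proof -
    fix i P assume i: "i \<in> {1..<length T}" and P: "P \<in> set T" "T!(i-1) \<subseteq> P" "P \<subseteq> T!i"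
    obtain j where j: "j < length T" "P = T!j" using P(1) by (metis in_set_conv_nth)
    show "P = T!(i-1) \<or> P = T!i"
    proof (cases "j < i - 1")
      case True
      moreover have "i - 1 < length T" using i by auto
      ultimately have "T!j \<subset> T!(i-1)" using srt by blast
      then show ?thesis using P j by auto
    next
      case False
      then have "j = i - 1 \<or> i \<le> j" by auto
      then show ?thesis
      proof
        assume "i \<le> j" then have "T!i \<subseteq> T!j" using le[of i j] j by auto
        then show ?thesis using P j by auto
      qed (use j in auto)
    qed
  qed
  have part1: "free_separators S indep \<subseteq>
           (\<Union>i\<in>{1..<length T}. set_interval (T ! (i - 1)) (T ! i) \<inter> free_separators S indep)"
  proof
    fix A assume A: "A \<in> free_separators S indep"
    obtain L U where LU: "L \<in> set T" "U \<in> set T" "L \<subseteq> A" "A \<subseteq> U"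
        "\<forall>X\<in>Dlat S indep. X \<subseteq> L \<or> U \<subseteq> X"
      using key[OF finS A] assms(4) by blast
    obtain j where j: "j < length T" "L = T!j" using LU(1) by (metis in_set_conv_nth)
    show "A \<in> (\<Union>i\<in>{1..<length T}. set_interval (T ! (i - 1)) (T ! i) \<inter> free_separators S indep)"
    proof (cases "L = U")
      case True
      then have AL: "A = L" using LU by auto
      show ?thesis
      proof (cases "j = 0")
        case True
        have "T!0 \<subseteq> T!1" using le[of 0 1] len by auto
        then have "A \<in> set_interval (T ! (1 - 1)) (T ! 1)" using AL j True
          by (auto simp: set_interval_def)
        then show ?thesis using A len by (intro UN_I[where a=1]) auto
      next
        case False
        have "T!(j-1) \<subseteq> T!j" using le[of "j-1" j] j by auto
        then have "A \<in> set_interval (T ! (j - 1)) (T ! j)" using AL j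
          by (auto simp: set_interval_def)
        then show ?thesis using A j False by (intro UN_I[where a=j]) auto
      qed
    next
      case False
      then have LU': "L \<subset> U" using LU by auto
      obtain m where m: "m < length T" "U = T!m" using LU(2) by (metis in_set_conv_nth)
      have "j < m"
      proof (rule ccontr)
        assume "\<not> j < m" then have "T!m \<subseteq> T!j" using le[of m j] j by auto
        then show False using LU' j m by auto
      qed
      then have j1: "j + 1 < length T" using m by auto
      have "T!j \<subset> T!(j+1)" using srt[of j "j+1"] j1 by auto
      moreover have "T!(j+1) \<subseteq> L \<or> U \<subseteq> T!(j+1)" using LU(5) pinD j1 by auto
      ultimately have "U \<subseteq> T!(j+1)" using j by auto
      then have "A \<in> set_interval (T ! (j + 1 - 1)) (T ! (j+1))" using LU j
        by (auto simp: set_interval_def)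
      then show ?thesis using A j1 by (intro UN_I[where a="j+1"]) auto
    qed
  qed
  have part2: "\<forall>i\<in>{1..<length T}.
           set_interval (T ! (i - 1)) (T ! i) \<inter> free_separators S indep =
           (if covers_in (Dlat S indep) (T ! i) (T ! (i - 1))
            then set_interval (T ! (i - 1)) (T ! i)
            else {T ! (i - 1), T ! i})"
  proof
    fix i assume i: "i \<in> {1..<length T}"
    define a where "a = T!(i-1)"
    define b where "b = T!i"
    have ab: "a \<subset> b" unfolding a_def b_def using srt[of "i-1" i] i by auto
    have aT: "a \<in> set T" "b \<in> set T" unfolding a_def b_def using i by auto
    have bS: "b \<subseteq> S" using D_sub pinD aT by blast
    show "set_interval (T ! (i - 1)) (T ! i) \<inter> free_separators S indep =
           (if covers_in (Dlat S indep) (T ! i) (T ! (i - 1))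
            then set_interval (T ! (i - 1)) (T ! i)
            else {T ! (i - 1), T ! i})"
    proof (cases "covers_in (Dlat S indep) b a")
      case True
      have "set_interval a b \<subseteq> free_separators S indep"
      proof
        fix A assume A: "A \<in> set_interval a b"
        have "\<forall>Z. cyclic_flat S indep Z \<longrightarrow> Z \<subseteq> A \<or> A \<subseteq> Z"
        proof (intro allI impI)
          fix Z assume "cyclic_flat S indep Z"
          then have Z: "Z \<in> Dlat S indep" by (rule Dlat.cyc)
          have "a \<subseteq> Z \<or> Z \<subseteq> a" "b \<subseteq> Z \<or> Z \<subseteq> b" using pinC[OF aT(1) Z] pinC[OF aT(2) Z] by auto
          moreover have "\<not> (a \<subset> Z \<and> Z \<subset> b)" using True Z unfolding covers_in_def by blast
          moreover have "a \<subseteq> A" "A \<subseteq> b" using A unfolding set_interval_def by auto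
          ultimately show "Z \<subseteq> A \<or> A \<subseteq> Z" by (metis psubsetI subset_trans)
        qed
        then show "A \<in> free_separators S indep"
          using A bS unfolding set_interval_def free_separators_def by auto
      qed
      then have "set_interval a b \<inter> free_separators S indep = set_interval a b" by blast
      then show ?thesis using True unfolding a_def b_def by simp
    next
      case False
      then obtain X where X: "X \<in> Dlat S indep" "a \<subset> X" "X \<subset> b"
        using ab pinD[OF aT(1)] pinD[OF aT(2)] unfolding covers_in_def by blast
      have "set_interval a b \<inter> free_separators S indep = {a, b}"
      proof
        show "{a, b} \<subseteq> set_interval a b \<inter> free_separators S indep"
        proof -
          have "a \<in> free_separators S indep" "b \<in> free_separators S indep"
            using pinch_fs aT unfolding assms(4) by blast+
          moreover have "a \<in> set_interval a b" "b \<in> set_interval a b"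
            using ab unfolding set_interval_def by auto
          ultimately show ?thesis by blast
        qed
      next
        show "set_interval a b \<inter> free_separators S indep \<subseteq> {a, b}"
        proof
          fix A assume A: "A \<in> set_interval a b \<inter> free_separators S indep"
          then have Aab: "a \<subseteq> A" "A \<subseteq> b" by (auto simp: set_interval_def)
          obtain L U where LU: "L \<in> set T" "U \<in> set T" "L \<subseteq> A" "A \<subseteq> U"
              "\<forall>X\<in>Dlat S indep. X \<subseteq> L \<or> U \<subseteq> X"
            using key[OF finS IntD2[OF A]] unfolding assms(4) by blast
          show "A \<in> {a, b}"
          proof (rule ccontr)
            assume nA: "A \<notin> {a, b}"
            have "a \<subseteq> L \<or> U \<subseteq> a" using LU(5) pinD[OF aT(1)] by blast
            then have aL: "a \<subseteq> L" using LU(3,4) Aab nA by blast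
            have "b \<subseteq> L \<or> U \<subseteq> b" using LU(5) pinD[OF aT(2)] by blast
            then have Ub: "U \<subseteq> b" using LU(3,4) Aab nA by blast
            have "L = a \<or> L = b" using consec[OF i LU(1)] aL LU(3) Aab Ub
              unfolding a_def b_def by blast
            then have La: "L = a" using LU(3) Aab nA by blast
            have "U = a \<or> U = b" using consec[OF i LU(2)] aL LU(4) Aab Ub
              unfolding a_def b_def by blast
            then have Ub': "U = b" using LU(4) Aab nA by blast
            have "X \<subseteq> L \<or> U \<subseteq> X" using LU(5) X(1) by blast
            then show False using X(2,3) La Ub' by blast
          qed
        qed
      qed
      then show ?thesis using False unfolding a_def b_def by simp
    qed
  qed
  have eq: "free_separators S indep =
           (\<Union>i\<in>{1..<length T}. set_interval (T ! (i - 1)) (T ! i) \<inter> free_separators S indep)"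
    by (rule equalityI[OF part1]) blast
  show ?thesis using eq part2 by (rule conjI)
qed

end
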